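(* Let $n\ge3$. Suppose that for every set $W\subseteq V$ with $|W|=n$ that can be generated from some connected pair, there exist $X\supseteq W$ with $D[X]$ a directed sub-block and a node $i\in W$ reachable from all other nodes in both $D[W]$ and $D[X]$. Then the same conclusion holds for every set $W\subseteq V$ with $|W|=n+1$ that can be generated from some connected pair.
   Context: $D=(V,A)$ is a directed graph. $\mathrm{IN}(X)$ is the set of nodes from which some member of $X$ is reachable by a directed path. For disjoint nonempty $X,Y,Z$, $f_E(X,Y,Z)=1$ iff $\mathrm{IN}(X)\cap\mathrm{IN}(Y)=\emptyset$ computed in $D-Z$; node $j$ is dynamically partitioning relative to $k$ and $Y$ iff $f_E(\{k\},Y,\{j\})=1$. A connected pair is a set $\{i,j\}$ joined by an arc in some direction. A set $W_n$ of size $n$ can be generated from $W_m$ of size $m$, $2\le m<n$, iff there are sets $W_m\subset\dots\subset W_n$ with $W_{l+1}=W_l\cup\{k\}$, $k\in V\setminus W_l$, such that there is an arc from $k$ to some $j\in W_l$ that is not dynamically partitioning relative to $k$ and $W_l\setminus\{j\}$. $D[W]$ is the subgraph induced on $W$; reachability in $D[W]$ is via directed paths inside $D[W]$. A graph is biconnected if it has at least three vertices, is connected and remains connected after deleting any one vertex. $D[X]$ is a directed sub-block if some node of $X$ is reachable within $D[X]$ from all other nodes and the underlying undirected graph of $D[X]$ is biconnected. *)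

theory Defs
  imports Main
begin

definition digraph :: "'a set \<Rightarrow> ('a \<times> 'a) set \<Rightarrow> bool" where
  "digraph V A \<longleftrightarrow> finite V \<and> A \<subseteq> V \<times> V"

definition arcs_on :: "('a \<times> 'a) set \<Rightarrow> 'a set \<Rightarrow> ('a \<times> 'a) set" where
  "arcs_on A S = A \<inter> (S \<times> S)"

definition reach_in :: "('a \<times> 'a) set \<Rightarrow> 'a set \<Rightarrow> 'a \<Rightarrow> 'a \<Rightarrow> bool" where
  "reach_in A S x y \<longleftrightarrow> x \<in> S \<and> y \<in> S \<and> (x, y) \<in> (arcs_on A S)\<^sup>*"

definition IN_set :: "'a set \<Rightarrow> ('a \<times> 'a) set \<Rightarrow> 'a set \<Rightarrow> 'a set \<Rightarrow> 'a set" where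
  "IN_set V A Z X = {v. \<exists>x\<in>X. reach_in A (V - Z) v x}"

definition fE :: "'a set \<Rightarrow> ('a \<times> 'a) set \<Rightarrow> 'a set \<Rightarrow> 'a set \<Rightarrow> 'a set \<Rightarrow> bool" where
  "fE V A X Y Z \<longleftrightarrow> IN_set V A Z X \<inter> IN_set V A Z Y = {}"

definition dyn_part :: "'a set \<Rightarrow> ('a \<times> 'a) set \<Rightarrow> 'a \<Rightarrow> 'a \<Rightarrow> 'a set \<Rightarrow> bool" where
  "dyn_part V A j k Y \<longleftrightarrow> fE V A {k} Y {j}"

definition gen_step :: "'a set \<Rightarrow> ('a \<times> 'a) set \<Rightarrow> 'a set \<Rightarrow> 'a set \<Rightarrow> bool" where
  "gen_step V A W W' \<longleftrightarrow> (\<exists>k \<in> V - W. W' = insert k W \<and>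
      (\<exists>j \<in> W. (k, j) \<in> A \<and> \<not> dyn_part V A j k (W - {j})))"

definition generated_from :: "'a set \<Rightarrow> ('a \<times> 'a) set \<Rightarrow> 'a set \<Rightarrow> 'a set \<Rightarrow> bool" where
  "generated_from V A Wm Wn \<longleftrightarrow> finite Wm \<and> finite Wn \<and> 2 \<le> card Wm \<and> card Wm < card Wn
      \<and> (gen_step V A)\<^sup>*\<^sup>* Wm Wn"

definition connected_pair :: "'a set \<Rightarrow> ('a \<times> 'a) set \<Rightarrow> 'a set \<Rightarrow> bool" where
  "connected_pair V A P \<longleftrightarrow> (\<exists>i j. P = {i, j} \<and> i \<noteq> j \<and> ((i, j) \<in> A \<or> (j, i) \<in> A))"

definition generated_from_pair :: "'a set \<Rightarrow> ('a \<times> 'a) set \<Rightarrow> 'a set \<Rightarrow> bool" where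
  "generated_from_pair V A W \<longleftrightarrow> (\<exists>P. connected_pair V A P \<and> generated_from V A P W)"

definition und_connected :: "('a \<times> 'a) set \<Rightarrow> 'a set \<Rightarrow> bool" where
  "und_connected A S \<longleftrightarrow> (\<forall>x\<in>S. \<forall>y\<in>S. (x, y) \<in> (arcs_on A S \<union> (arcs_on A S)\<inverse>)\<^sup>*)"

definition und_biconnected :: "('a \<times> 'a) set \<Rightarrow> 'a set \<Rightarrow> bool" where
  "und_biconnected A S \<longleftrightarrow> finite S \<and> 3 \<le> card S \<and> und_connected A S
      \<and> (\<forall>v\<in>S. und_connected A (S - {v}))"

definition directed_sub_block :: "'a set \<Rightarrow> ('a \<times> 'a) set \<Rightarrow> 'a set \<Rightarrow> bool" where
  "directed_sub_block V A X \<longleftrightarrow> X \<subseteq> V \<and> (\<exists>r\<in>X. \<forall>x\<in>X. reach_in A X x r)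
      \<and> und_biconnected A X"

definition has_block_root :: "'a set \<Rightarrow> ('a \<times> 'a) set \<Rightarrow> 'a set \<Rightarrow> bool" where
  "has_block_root V A W \<longleftrightarrow> (\<exists>X. W \<subseteq> X \<and> directed_sub_block V A X \<and>
      (\<exists>i\<in>W. (\<forall>w\<in>W. reach_in A W w i) \<and> (\<forall>x\<in>X. reach_in A X x i)))"

end

theory Submission
  imports Defs
begin


lemma arcs_on_mono: "S \<subseteq> T \<Longrightarrow> arcs_on A S \<subseteq> arcs_on A T"
  unfolding arcs_on_def by auto

lemma rt_mono: "S \<subseteq> T \<Longrightarrow> (x,y) \<in> (arcs_on A S)\<^sup>* \<Longrightarrow> (x,y) \<in> (arcs_on A T)\<^sup>*"
  by (meson arcs_on_mono rtrancl_mono subsetD)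

lemma reach_in_mono: "S \<subseteq> T \<Longrightarrow> reach_in A S x y \<Longrightarrow> reach_in A T x y"
  unfolding reach_in_def using rt_mono by (metis subsetD)

lemma chain_to_last:
  "successively (\<lambda>a b. (a,b) \<in> A) p \<Longrightarrow> set p \<subseteq> S \<Longrightarrow> x \<in> set p \<Longrightarrow> (x, last p) \<in> (arcs_on A S)\<^sup>*"
proof (induction p arbitrary: x)
  case (Cons a xs)
  show ?case
  proof (cases xs)
    case Nil then show ?thesis using Cons by simp
  next
    case (Cons b ys)
    have ab: "(a,b) \<in> arcs_on A S" using Cons.prems \<open>xs = b#ys\<close> by (auto simp: arcs_on_def)
    have IH: "\<And>x. x \<in> set xs \<Longrightarrow> (x, last xs) \<in> (arcs_on A S)\<^sup>*" using Cons.IH Cons.prems \<open>xs = b#ys\<close> by auto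
    show ?thesis
    proof (cases "x = a")
      case True
      then show ?thesis using IH[of b] ab \<open>xs = b#ys\<close> by (simp add: converse_rtrancl_into_rtrancl)
    next
      case False
      then show ?thesis using IH Cons.prems \<open>xs = b#ys\<close> by auto
    qed
  qed
qed simp

lemma chain_from_hd:
  "successively (\<lambda>a b. (a,b) \<in> A) p \<Longrightarrow> set p \<subseteq> S \<Longrightarrow> x \<in> set p \<Longrightarrow> (hd p, x) \<in> (arcs_on A S)\<^sup>*"
proof (induction p arbitrary: x)
  case (Cons a xs)
  show ?case
  proof (cases xs)
    case Nil then show ?thesis using Cons by simp
  next
    case (Cons b ys)
    have ab: "(a,b) \<in> arcs_on A S" using Cons.prems \<open>xs = b#ys\<close> by (auto simp: arcs_on_def)
    have IH: "\<And>x. x \<in> set xs \<Longrightarrow> (b, x) \<in> (arcs_on A S)\<^sup>*" using Cons.IH Cons.prems \<open>xs = b#ys\<close> by auto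
    show ?thesis
    proof (cases "x = a")
      case True
      then show ?thesis by simp
    next
      case False
      then show ?thesis using IH Cons.prems ab by (auto intro: converse_rtrancl_into_rtrancl)
    qed
  qed
qed simp

lemma path_exists:
  assumes "(x,y) \<in> (arcs_on A S)\<^sup>*" "x \<in> S"
  shows "\<exists>p. successively (\<lambda>a b. (a,b) \<in> A) p \<and> distinct p \<and> p \<noteq> [] \<and> hd p = x \<and> last p = y \<and> set p \<subseteq> S"
  using assms(1)
proof (induction rule: rtrancl_induct)
  case base
  then show ?case using assms(2) by (intro exI[of _ "[x]"]) auto
next
  case (step y z)
  then obtain p where p: "successively (\<lambda>a b. (a,b) \<in> A) p" "distinct p" "p \<noteq> []" "hd p = x" "last p = y" "set p \<subseteq> S" by blast
  show ?case
  proof (cases "z \<in> set p")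
    case True
    then obtain p1 p2 where sp: "p = p1 @ z # p2" by (meson split_list)
    have "successively (\<lambda>a b. (a,b) \<in> A) (p1 @ [z])"
      using p(1) unfolding sp by (auto simp: successively_append_iff successively_Cons)
    moreover have "hd (p1 @ [z]) = x" using p(4) sp by (cases p1) auto
    moreover have "distinct (p1 @ [z])" using p(2) sp by simp
    moreover have "set (p1 @ [z]) \<subseteq> S" using p(6) sp by auto
    ultimately show ?thesis by (intro exI[of _ "p1 @ [z]"]) simp
  next
    case False
    have "successively (\<lambda>a b. (a,b) \<in> A) (p @ [z])"
      using p step(2) by (auto simp: successively_append_iff arcs_on_def)
    moreover have "distinct (p @ [z])" using p(2) False by simp
    moreover have "set (p @ [z]) \<subseteq> S" using p(6) step(2) by (auto simp: arcs_on_def)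
    moreover have "hd (p @ [z]) = x" using p(3,4) by simp
    ultimately show ?thesis by (intro exI[of _ "p @ [z]"]) simp
  qed
qed

lemma chain_transition:
  "successively R q \<Longrightarrow> q \<noteq> [] \<Longrightarrow> P (hd q) \<Longrightarrow> \<not> P (last q) \<Longrightarrow>
   \<exists>y y'. P y \<and> \<not> P y' \<and> R y y' \<and> y \<in> set q \<and> y' \<in> set q"
proof (induction q)
  case Nil then show ?case by simp
next
  case (Cons a xs)
  show ?case
  proof (cases xs)
    case Nil then show ?thesis using Cons.prems by simp
  next
    case (Cons b ys)
    have Rab: "R a b" using Cons.prems(1) \<open>xs = b#ys\<close> by simp
    have sx: "successively R xs" using Cons.prems(1) \<open>xs = b#ys\<close> by simp
    have lx: "\<not> P (last xs)" using Cons.prems(4) \<open>xs = b#ys\<close> by simp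
    show ?thesis
    proof (cases "P b")
      case True
      then have "P (hd xs)" using \<open>xs = b#ys\<close> by simp
      then obtain y y' where "P y \<and> \<not> P y' \<and> R y y' \<and> y \<in> set xs \<and> y' \<in> set xs"
        using Cons.IH[OF sx _ _ lx] \<open>xs = b#ys\<close> by blast
      then show ?thesis by auto
    next
      case False
      then show ?thesis using Rab Cons.prems(3) \<open>xs = b#ys\<close> by (intro exI[of _ a] exI[of _ b]) simp
    qed
  qed
qed



definition UR :: "('a \<times> 'a) set \<Rightarrow> 'a set \<Rightarrow> ('a \<times> 'a) set" where
  "UR A S = (arcs_on A S \<union> (arcs_on A S)\<inverse>)\<^sup>*"

lemma UR_sym: "(x,y) \<in> UR A S \<Longrightarrow> (y,x) \<in> UR A S"
  unfolding UR_def by (metis converse_Un converse_converse rtrancl_converseI sup_commute)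

lemma UR_trans: "(x,y) \<in> UR A S \<Longrightarrow> (y,z) \<in> UR A S \<Longrightarrow> (x,z) \<in> UR A S"
  unfolding UR_def by (meson rtrancl_trans)

lemma UR_mono: "S \<subseteq> T \<Longrightarrow> (x,y) \<in> UR A S \<Longrightarrow> (x,y) \<in> UR A T"
  unfolding UR_def by (metis arcs_on_mono converse_mono rtrancl_mono sup.mono subsetD)

lemma und_connected_UR: "und_connected A S \<longleftrightarrow> (\<forall>x\<in>S. \<forall>y\<in>S. (x,y) \<in> UR A S)"
  unfolding und_connected_def UR_def by simp

lemma chain_conn:
  "successively (\<lambda>x y. (x,y)\<in>A \<or> (y,x)\<in>A) L \<Longrightarrow> set L \<subseteq> S \<Longrightarrow> x \<in> set L \<Longrightarrow> y \<in> set L \<Longrightarrow> (x,y) \<in> UR A S"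
proof (induction L arbitrary: x y)
  case Nil then show ?case by simp
next
  case (Cons a xs)
  show ?case
  proof (cases xs)
    case Nil then show ?thesis using Cons by (simp add: UR_def)
  next
    case (Cons b ys)
    have ab: "(a,b) \<in> UR A S" using Cons.prems \<open>xs = b#ys\<close> unfolding UR_def arcs_on_def by auto
    have IH: "\<And>x y. x \<in> set xs \<Longrightarrow> y \<in> set xs \<Longrightarrow> (x, y) \<in> UR A S"
      using Cons.IH Cons.prems \<open>xs = b#ys\<close> by auto
    have bx: "b \<in> set xs" using \<open>xs = b#ys\<close> by simp
    have aa: "(a,a) \<in> UR A S" unfolding UR_def by simp
    show ?thesis using Cons.prems(3,4) IH[OF bx] IH ab aa UR_sym UR_trans
      by (metis set_ConsD)
  qed
qed

lemma succ_tl: "successively P (x # xs) \<Longrightarrow> successively P xs"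
  by (cases xs) auto

lemma ear_conn:
  assumes bc: "und_biconnected A X" and ab: "a \<in> X" "b \<in> X" "a \<noteq> b"
    and de: "distinct es" "set es \<inter> X = {}"
    and ch: "successively (\<lambda>x y. (x,y)\<in>A \<or> (y,x)\<in>A) (a # es @ [b])"
    and D: "D \<subseteq> {u}"
  shows "und_connected A (X \<union> set es - D)"
proof -
  define Y where "Y = X \<union> set es - D"
  define L where "L = a # es @ [b]"
  have finX: "finite X" and c3: "3 \<le> card X" using bc unfolding und_biconnected_def by auto
  have X0c: "und_connected A (X - D)"
  proof (cases "D = {}")
    case True then show ?thesis using bc unfolding und_biconnected_def by simp
  next
    case False
    then have "D = {u}" using D by auto
    then show ?thesis using bc unfolding und_biconnected_def
      by (cases "u \<in> X") auto
  qed
  have "card (X - D) \<ge> 2"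
  proof -
    have "card D \<le> 1" using D using card_mono[OF _ D] by simp
    moreover have "card (X - D) \<ge> card X - card D" using finite_subset[OF D] by (simp add: diff_card_le_card_Diff)
    ultimately show ?thesis using c3 by linarith
  qed

  have distL: "distinct L" using de ab unfolding L_def by auto
  have setL: "set L \<subseteq> X \<union> set es" using ab unfolding L_def by auto
  have chL: "successively (\<lambda>x y. (x,y)\<in>A \<or> (y,x)\<in>A) L" using ch unfolding L_def by simp
  have key: "\<exists>x0\<in>X - D. (x0, y) \<in> UR A Y" if y: "y \<in> Y" for y
  proof (cases "y \<in> X")
    case True
    then show ?thesis using y unfolding Y_def UR_def by (intro bexI[of _ y]) auto
  next
    case False
    then have yes: "y \<in> set es" "y \<notin> D" using y unfolding Y_def by auto
    then have yL: "y \<in> set L" unfolding L_def by simp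
    show ?thesis
    proof (cases "D \<inter> set L = {}")
      case True
      then have LY: "set L \<subseteq> Y" using setL unfolding Y_def by auto
      have aL: "a \<in> set L" unfolding L_def by simp
      have "(a,y) \<in> UR A Y" by (rule chain_conn[OF chL LY aL yL])
      moreover have "a \<in> X - D" using True ab unfolding L_def by auto
      ultimately show ?thesis by blast
    next
      case False
      then have uD: "D = {u}" "u \<in> set L" using D by auto
      then obtain L1 L2 where sp: "L = L1 @ u # L2" by (meson split_list)
      have uL1: "u \<notin> set L1" "u \<notin> set L2" using distL sp by auto
      have yne: "y \<noteq> u" using yes uD by auto
      have ch1: "successively (\<lambda>x y. (x,y)\<in>A \<or> (y,x)\<in>A) L1"
        and ch2: "successively (\<lambda>x y. (x,y)\<in>A \<or> (y,x)\<in>A) L2"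
      proof -
        have "successively (\<lambda>x y. (x,y)\<in>A \<or> (y,x)\<in>A) (L1 @ u # L2)" using chL sp by simp
        then have h: "successively (\<lambda>x y. (x,y)\<in>A \<or> (y,x)\<in>A) L1 \<and> successively (\<lambda>x y. (x,y)\<in>A \<or> (y,x)\<in>A) (u # L2)"
          by (simp only: successively_append_iff)
        show "successively (\<lambda>x y. (x,y)\<in>A \<or> (y,x)\<in>A) L1" by (rule conjunct1[OF h])
        show "successively (\<lambda>x y. (x,y)\<in>A \<or> (y,x)\<in>A) L2" by (rule succ_tl[OF conjunct2[OF h]])
      qed
      have s1: "set L1 \<subseteq> Y" "set L2 \<subseteq> Y" using setL sp uL1 uD unfolding Y_def by auto
      have "y \<in> set L1 \<or> y \<in> set L2" using yL sp yne by auto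
      then show ?thesis
      proof
        assume y1: "y \<in> set L1"
        then have "L1 \<noteq> []" by auto
        then have "hd L = hd L1" using sp by simp
        then have "hd L1 = a" unfolding L_def by simp
        then have a1: "a \<in> set L1" using \<open>L1 \<noteq> []\<close> by auto
        have "(a,y) \<in> UR A Y" using chain_conn[OF ch1 s1(1) a1 y1] .
        moreover have "a \<in> X - D" using a1 uL1 uD ab by auto
        ultimately show ?thesis by blast
      next
        assume y2: "y \<in> set L2"
        then have "L2 \<noteq> []" by auto
        then have "last L = last L2" using sp by simp
        then have "last L2 = b" unfolding L_def by simp
        then have b2: "b \<in> set L2" using \<open>L2 \<noteq> []\<close> by auto
        have "(b,y) \<in> UR A Y" using chain_conn[OF ch2 s1(2) b2 y2] .
        moreover have "b \<in> X - D" using b2 uL1 uD ab by auto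
        ultimately show ?thesis by blast
      qed
    qed
  qed
  have XY: "X - D \<subseteq> Y" unfolding Y_def by auto
  have X0c': "\<forall>x\<in>X - D. \<forall>y\<in>X - D. (x,y) \<in> UR A (X - D)" using X0c unfolding und_connected_UR .
  have all: "\<forall>y1\<in>Y. \<forall>y2\<in>Y. (y1,y2) \<in> UR A Y"
  proof (intro ballI)
    fix y1 y2 assume y12: "y1 \<in> Y" "y2 \<in> Y"
    obtain x1 where x1: "x1 \<in> X - D" "(x1,y1) \<in> UR A Y" using key[OF y12(1)] by (elim bexE)
    obtain x2 where x2: "x2 \<in> X - D" "(x2,y2) \<in> UR A Y" using key[OF y12(2)] by (elim bexE)
    have "(x1,x2) \<in> UR A (X - D)" using X0c' x1(1) x2(1) by simp
    then have "(x1,x2) \<in> UR A Y" by (rule UR_mono[OF XY])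
    then have "(y1,x2) \<in> UR A Y" by (rule UR_trans[OF UR_sym[OF x1(2)]])
    then show "(y1,y2) \<in> UR A Y" by (rule UR_trans[OF _ x2(2)])
  qed
  then show ?thesis unfolding und_connected_UR Y_def .
qed

lemma ear:
  assumes bc: "und_biconnected A X" and ab: "a \<in> X" "b \<in> X" "a \<noteq> b"
    and de: "distinct es" "set es \<inter> X = {}"
    and ch: "successively (\<lambda>x y. (x,y)\<in>A \<or> (y,x)\<in>A) (a # es @ [b])"
  shows "und_biconnected A (X \<union> set es)"
proof -
  have finX: "finite X" and c3: "3 \<le> card X" using bc unfolding und_biconnected_def by auto
  have "card X \<le> card (X \<union> set es)" using finX by (simp add: card_mono)
  moreover have "und_connected A (X \<union> set es)" using ear_conn[OF assms, of "{}"] by simp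
  moreover have "\<forall>v\<in>X \<union> set es. und_connected A (X \<union> set es - {v})"
    using ear_conn[OF assms] by blast
  ultimately show ?thesis using finX c3 unfolding und_biconnected_def by auto
qed



lemma succ_build3:
  assumes "successively R xs" "xs \<noteq> []" "R a (hd xs)" "R (last xs) b"
  shows "successively R (a # xs @ [b])"
  using assms by (simp add: successively_append_iff successively_Cons)

lemma succ_build4:
  assumes "successively R xs" "successively R ys" "xs \<noteq> []" "ys \<noteq> []"
    "R a (hd xs)" "R (last xs) (hd ys)" "R (last ys) b"
  shows "successively R (a # xs @ ys @ [b])"
proof -
  have "successively R (xs @ ys)" using assms by (simp add: successively_append_iff)
  moreover have "hd (xs @ ys) = hd xs" "last (xs @ ys) = last ys" using assms(3,4) by auto
  moreover have "xs @ ys \<noteq> []" using assms(3) by simp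
  ultimately have "successively R (a # (xs @ ys) @ [b])" using succ_build3[of R "xs @ ys" a b] assms(5,7) by simp
  then show ?thesis by simp
qed

lemma DA_U: "successively (\<lambda>a b. (a,b) \<in> A) p \<Longrightarrow> successively (\<lambda>x y. (x,y)\<in>A \<or> (y,x)\<in>A) p"
  by (erule successively_mono) simp

lemma DA_U_rev: "successively (\<lambda>a b. (a,b) \<in> A) p \<Longrightarrow> successively (\<lambda>x y. (x,y)\<in>A \<or> (y,x)\<in>A) (rev p)"
  unfolding successively_rev by (erule successively_mono) simp

lemma reach_comb: "(x,y) \<in> (arcs_on A T)\<^sup>* \<Longrightarrow> (y,z) \<in> arcs_on A T \<Longrightarrow> (z,i) \<in> (arcs_on A T)\<^sup>* \<Longrightarrow> (x,i) \<in> (arcs_on A T)\<^sup>*"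
  by (meson rtrancl_trans r_into_rtrancl)

lemma ear_extend:
  assumes bc: "und_biconnected A X" and XV: "X \<subseteq> V" and iX: "i \<in> X"
    and reachX: "\<forall>x\<in>X. reach_in A X x i"
    and jX: "j \<in> X" and kV: "k \<in> V" and kX: "k \<notin> X" and kj: "(k,j) \<in> A"
    and vk: "reach_in A (V - {j}) v k" and vw: "reach_in A (V - {j}) v w"
    and wX: "w \<in> X" and wj: "w \<noteq> j"
  shows "\<exists>X'. X \<subseteq> X' \<and> X' \<subseteq> V \<and> k \<in> X' \<and> und_biconnected A X' \<and> (\<forall>x\<in>X'. reach_in A X' x i)"
proof -
  define S where "S = V - {j} - X"
  define K where "K = {u. reach_in A S u k}"
  have kS: "k \<in> S" using kV kX jX unfolding S_def by auto
  have SX: "S \<inter> X = {}" "S \<subseteq> V" unfolding S_def by auto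
  have Xi: "\<And>x. x \<in> X \<Longrightarrow> (x,i) \<in> (arcs_on A X)\<^sup>*" using reachX unfolding reach_in_def by blast
  show ?thesis
  proof (cases "\<exists>u b. u \<in> K \<and> b \<in> X \<and> b \<noteq> j \<and> ((b,u) \<in> A \<or> (u,b) \<in> A)")
    case True
    then obtain u b where ub: "u \<in> K" "b \<in> X" "b \<noteq> j" "(b,u) \<in> A \<or> (u,b) \<in> A" by blast
    have uS: "u \<in> S" "(u,k) \<in> (arcs_on A S)\<^sup>*" using ub(1) unfolding K_def reach_in_def by auto
    obtain p where p: "successively (\<lambda>a b. (a,b) \<in> A) p" "distinct p" "p \<noteq> []" "hd p = u" "last p = k" "set p \<subseteq> S"
      using path_exists[OF uS(2) uS(1)] by blast
    define X' where "X' = X \<union> set p"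
    have ch: "successively (\<lambda>x y. (x,y)\<in>A \<or> (y,x)\<in>A) (b # p @ [j])"
      apply (rule succ_build3[OF DA_U[OF p(1)] p(3)])
      using ub(4) p(4,5) kj by auto
    have dis: "set p \<inter> X = {}" using p(6) SX by auto
    have bcX': "und_biconnected A X'" unfolding X'_def
      by (rule ear[OF bc ub(2) jX ub(3) p(2) dis ch])
    have sub: "X \<subseteq> X'" "set p \<subseteq> X'" unfolding X'_def by auto
    have kX': "k \<in> X'" using p(3,5) sub by auto
    have X'V: "X' \<subseteq> V" using XV p(6) SX unfolding X'_def by auto
    have kjX': "(k,j) \<in> arcs_on A X'" using kX' jX sub kj unfolding arcs_on_def by auto
    have jiX': "(j,i) \<in> (arcs_on A X')\<^sup>*" using rt_mono[OF sub(1) Xi[OF jX]] .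
    have reach: "\<forall>x\<in>X'. reach_in A X' x i"
    proof
      fix x assume xX': "x \<in> X'"
      have "(x,i) \<in> (arcs_on A X')\<^sup>*"
      proof (cases "x \<in> X")
        case True then show ?thesis using rt_mono[OF sub(1) Xi[OF True]] by simp
      next
        case False
        then have xp: "x \<in> set p" using xX' unfolding X'_def by simp
        have "(x, last p) \<in> (arcs_on A (set p))\<^sup>*" by (rule chain_to_last[OF p(1) order_refl xp])
        then have "(x, k) \<in> (arcs_on A X')\<^sup>*" using rt_mono[OF sub(2)] p(5) by simp
        then show ?thesis by (rule reach_comb[OF _ kjX' jiX'])
      qed
      then show "reach_in A X' x i" using xX' sub iX unfolding reach_in_def by auto
    qed
    show ?thesis using sub kX' X'V bcX' reach by blast
  next
    case False
    have c1: "(u,k) \<in> (arcs_on A (V - {j}))\<^sup>* \<Longrightarrow> u \<in> K" for u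
    proof (induction rule: converse_rtrancl_induct)
      case base then show ?case using kS unfolding K_def reach_in_def by simp
    next
      case (step u u')
      have u'K: "u' \<in> K" by (rule step.IH)
      have uu': "(u,u') \<in> A" "u \<in> V - {j}" using step.hyps(1) unfolding arcs_on_def by auto
      have u'S: "u' \<in> S" "(u',k) \<in> (arcs_on A S)\<^sup>*" using u'K unfolding K_def reach_in_def by auto
      have "u \<notin> X"
      proof
        assume "u \<in> X"
        then show False using False u'K uu' by blast
      qed
      then have uS: "u \<in> S" using uu' unfolding S_def by auto
      have "(u,u') \<in> arcs_on A S" using uS u'S uu' unfolding arcs_on_def by auto
      then have "(u,k) \<in> (arcs_on A S)\<^sup>*" using u'S(2) by (rule converse_rtrancl_into_rtrancl)
      then show ?case using uS kS unfolding K_def reach_in_def by simp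
    qed
    have c2: "(u,w) \<in> (arcs_on A (V - {j}))\<^sup>* \<Longrightarrow>
      u \<in> X - {j} \<or> (u \<in> S \<and> (\<exists>z\<in>S. \<exists>b. b \<in> X \<and> b \<noteq> j \<and> (u,z) \<in> (arcs_on A S)\<^sup>* \<and> (z,b) \<in> A))" for u
    proof (induction rule: converse_rtrancl_induct)
      case base then show ?case using wX wj by simp
    next
      case (step u u')
      have uu': "(u,u') \<in> A" "u \<in> V - {j}" "u' \<in> V - {j}" using step.hyps(1) unfolding arcs_on_def by auto
      show ?case
      proof (cases "u \<in> X")
        case True then show ?thesis using uu' by simp
      next
        case uX: False
        then have uS: "u \<in> S" using uu' unfolding S_def by auto
        show ?thesis
        proof (cases "u' \<in> X")
          case True
          then show ?thesis using uS uu' by auto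
        next
          case u'X: False
          then obtain z b where zb: "u' \<in> S" "z \<in> S" "b \<in> X" "b \<noteq> j" "(u',z) \<in> (arcs_on A S)\<^sup>*" "(z,b) \<in> A"
            using step.IH by blast
          have "(u,u') \<in> arcs_on A S" using uS zb(1) uu' unfolding arcs_on_def by auto
          then have "(u,z) \<in> (arcs_on A S)\<^sup>*" using zb(5) by (rule converse_rtrancl_into_rtrancl)
          then show ?thesis using uS zb by blast
        qed
      qed
    qed
    have vK: "v \<in> K" using c1 vk unfolding reach_in_def by blast
    have vS: "v \<in> S" using vK unfolding K_def reach_in_def by simp
    then have vX: "v \<notin> X" using SX by auto
    obtain z b where zb: "z \<in> S" "b \<in> X" "b \<noteq> j" "(v,z) \<in> (arcs_on A S)\<^sup>*" "(z,b) \<in> A"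
      using c2[of v] vw vX unfolding reach_in_def by blast
    have zK: "z \<notin> K" using False zb by blast
    obtain q where q: "successively (\<lambda>a b. (a,b) \<in> A) q" "distinct q" "q \<noteq> []" "hd q = v" "last q = z" "set q \<subseteq> S"
      using path_exists[OF zb(4) vS] by blast
    obtain y y' where yy: "y \<in> K" "y' \<notin> K" "(y,y') \<in> A" "y \<in> set q" "y' \<in> set q"
      using chain_transition[of "\<lambda>a b. (a,b) \<in> A" q "\<lambda>x. x \<in> K", OF q(1) q(3)] q(4,5) vK zK by blast
    have y'S: "y' \<in> S" using yy(5) q(6) by auto
    have "(y', last q) \<in> (arcs_on A S)\<^sup>*" by (rule chain_to_last[OF q(1) q(6) yy(5)])
    then have y'z: "(y', z) \<in> (arcs_on A S)\<^sup>*" using q(5) by simp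
    obtain f where f: "successively (\<lambda>a b. (a,b) \<in> A) f" "distinct f" "f \<noteq> []" "hd f = y'" "last f = z" "set f \<subseteq> S"
      using path_exists[OF y'z y'S] by blast
    have fK: "x \<notin> K" if xf: "x \<in> set f" for x
    proof
      assume xK: "x \<in> K"
      have "(hd f, x) \<in> (arcs_on A S)\<^sup>*" by (rule chain_from_hd[OF f(1) f(6) xf])
      moreover have "(x,k) \<in> (arcs_on A S)\<^sup>*" using xK unfolding K_def reach_in_def by simp
      ultimately have "(y',k) \<in> (arcs_on A S)\<^sup>*" using f(4) by simp
      then have "y' \<in> K" using y'S kS unfolding K_def reach_in_def by simp
      then show False using yy(2) by simp
    qed
    have yS: "y \<in> S" "(y,k) \<in> (arcs_on A S)\<^sup>*" using yy(1) unfolding K_def reach_in_def by auto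
    obtain e where e: "successively (\<lambda>a b. (a,b) \<in> A) e" "distinct e" "e \<noteq> []" "hd e = y" "last e = k" "set e \<subseteq> S"
      using path_exists[OF yS(2) yS(1)] by blast
    have eK: "x \<in> K" if xe: "x \<in> set e" for x
    proof -
      have "(x, last e) \<in> (arcs_on A S)\<^sup>*" by (rule chain_to_last[OF e(1) e(6) xe])
      then show ?thesis using e(5,6) xe kS unfolding K_def reach_in_def by auto
    qed
    have ef: "set e \<inter> set f = {}" using eK fK by blast
    define es where "es = rev e @ f"
    have des: "distinct es" unfolding es_def using e(2) f(2) ef by auto
    have disX: "set es \<inter> X = {}" unfolding es_def using e(6) f(6) SX by auto
    have ch: "successively (\<lambda>x y. (x,y)\<in>A \<or> (y,x)\<in>A) (j # rev e @ f @ [b])"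
      apply (rule succ_build4[OF DA_U_rev[OF e(1)] DA_U[OF f(1)]])
      using e(3,4,5) f(3,4,5) kj yy(3) zb(5) by (auto simp: hd_rev last_rev)
    have bcX': "und_biconnected A (X \<union> set es)"
      by (rule ear[OF bc jX zb(2) _ des disX]) (use zb(3) ch in \<open>auto simp: es_def\<close>)
    define X' where "X' = X \<union> set es"
    have sub: "X \<subseteq> X'" "set e \<subseteq> X'" "set f \<subseteq> X'" unfolding X'_def es_def by auto
    have kX': "k \<in> X'" using e(3,5) sub by auto
    have X'V: "X' \<subseteq> V" using XV e(6) f(6) SX unfolding X'_def es_def by auto
    have kjX': "(k,j) \<in> arcs_on A X'" using kX' jX sub kj unfolding arcs_on_def by auto
    have jiX': "(j,i) \<in> (arcs_on A X')\<^sup>*" using rt_mono[OF sub(1) Xi[OF jX]] .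
    have zX': "z \<in> X'" using f(3,5) sub by auto
    have zbX': "(z,b) \<in> arcs_on A X'" using zX' zb(2,5) sub unfolding arcs_on_def by auto
    have biX': "(b,i) \<in> (arcs_on A X')\<^sup>*" using rt_mono[OF sub(1) Xi[OF zb(2)]] .
    have reach: "\<forall>x\<in>X'. reach_in A X' x i"
    proof
      fix x assume xX': "x \<in> X'"
      have "(x,i) \<in> (arcs_on A X')\<^sup>*"
      proof (cases "x \<in> X")
        case True then show ?thesis using rt_mono[OF sub(1) Xi[OF True]] by simp
      next
        case False
        then have "x \<in> set e \<or> x \<in> set f" using xX' unfolding X'_def es_def by simp
        then show ?thesis
        proof
          assume xe: "x \<in> set e"
          have "(x, last e) \<in> (arcs_on A (set e))\<^sup>*" by (rule chain_to_last[OF e(1) order_refl xe])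
          then have "(x, k) \<in> (arcs_on A X')\<^sup>*" using rt_mono[OF sub(2)] e(5) by simp
          then show ?thesis by (rule reach_comb[OF _ kjX' jiX'])
        next
          assume xf: "x \<in> set f"
          have "(x, last f) \<in> (arcs_on A (set f))\<^sup>*" by (rule chain_to_last[OF f(1) order_refl xf])
          then have "(x, z) \<in> (arcs_on A X')\<^sup>*" using rt_mono[OF sub(3)] f(5) by simp
          then show ?thesis by (rule reach_comb[OF _ zbX' biX'])
        qed
      qed
      then show "reach_in A X' x i" using xX' sub iX unfolding reach_in_def by auto
    qed
    have "und_biconnected A X'" using bcX' unfolding X'_def .
    then show ?thesis using sub kX' X'V reach by blast
  qed
qed



lemma rtranclp_last: "r\<^sup>*\<^sup>* a b \<Longrightarrow> a \<noteq> b \<Longrightarrow> \<exists>c. r\<^sup>*\<^sup>* a c \<and> r c b"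
  by (erule rtranclp.cases) auto

theorem mainTheorem7:
  fixes V :: "'a set" and A :: "('a \<times> 'a) set" and n :: nat
  assumes "digraph V A"
    and "n \<ge> 3"
    and "\<forall>W. W \<subseteq> V \<and> card W = n \<and> generated_from_pair V A W \<longrightarrow> has_block_root V A W"
  shows "\<forall>W. W \<subseteq> V \<and> card W = n + 1 \<and> generated_from_pair V A W \<longrightarrow> has_block_root V A W"
proof (intro allI impI)
  fix W assume asm: "W \<subseteq> V \<and> card W = n + 1 \<and> generated_from_pair V A W"
  then have WV: "W \<subseteq> V" and cW: "card W = n + 1" and gp: "generated_from_pair V A W" by auto
  obtain P where cp: "connected_pair V A P" and gf: "generated_from V A P W"
    using gp unfolding generated_from_pair_def by blast
  have cP: "card P = 2" using cp unfolding connected_pair_def by auto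
  have finP: "finite P" and finW: "finite W" and rt: "(gen_step V A)\<^sup>*\<^sup>* P W"
    using gf unfolding generated_from_def by auto
  have "P \<noteq> W" using cP cW assms(2) by auto
  then obtain W' where rt': "(gen_step V A)\<^sup>*\<^sup>* P W'" and gs: "gen_step V A W' W"
    using rtranclp_last[OF rt] by blast
  obtain k j where kV: "k \<in> V" "k \<notin> W'" and Wk: "W = insert k W'" and jW: "j \<in> W'"
    and kj: "(k,j) \<in> A" and ndp: "\<not> dyn_part V A j k (W' - {j})"
    using gs unfolding gen_step_def by blast
  have finW': "finite W'" using finW Wk by simp
  have cW': "card W' = n" using cW Wk kV(2) finW' by simp
  have W'V: "W' \<subseteq> V" using WV Wk by simp
  have "generated_from V A P W'" using finP finW' cP cW' assms(2) rt' unfolding generated_from_def by simp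
  then have "generated_from_pair V A W'" using cp unfolding generated_from_pair_def by blast
  then have "has_block_root V A W'" using assms(3) W'V cW' by blast
  then obtain X i where WX: "W' \<subseteq> X" and dsb: "directed_sub_block V A X" and iW: "i \<in> W'"
    and rW: "\<forall>w\<in>W'. reach_in A W' w i" and rX: "\<forall>x\<in>X. reach_in A X x i"
    unfolding has_block_root_def by blast
  have XV: "X \<subseteq> V" and bc: "und_biconnected A X" using dsb unfolding directed_sub_block_def by auto
  obtain v w where vk: "reach_in A (V - {j}) v k" and vw: "reach_in A (V - {j}) v w" and wW: "w \<in> W' - {j}"
    using ndp unfolding dyn_part_def fE_def IN_set_def by blast
  have "\<exists>X'. X \<subseteq> X' \<and> X' \<subseteq> V \<and> k \<in> X' \<and> und_biconnected A X' \<and> (\<forall>x\<in>X'. reach_in A X' x i)"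
  proof (cases "k \<in> X")
    case True then show ?thesis using XV bc rX by blast
  next
    case False
    show ?thesis
      by (rule ear_extend[OF bc XV _ rX _ kV(1) False kj vk vw]) (use iW jW wW WX in auto)
  qed
  then obtain X' where X': "X \<subseteq> X'" "X' \<subseteq> V" "k \<in> X'" "und_biconnected A X'" "\<forall>x\<in>X'. reach_in A X' x i"
    by blast
  have WX': "W \<subseteq> X'" using Wk WX X' by auto
  have sW: "W' \<subseteq> W" using Wk by auto
  have rW2: "\<forall>x\<in>W. reach_in A W x i"
  proof
    fix x assume xW: "x \<in> W"
    show "reach_in A W x i"
    proof (cases "x = k")
      case True
      have "(k,j) \<in> arcs_on A W" using kj Wk jW unfolding arcs_on_def by auto
      moreover have "(j,i) \<in> (arcs_on A W)\<^sup>*" using rW jW rt_mono[OF sW] unfolding reach_in_def by blast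
      ultimately have "(k,i) \<in> (arcs_on A W)\<^sup>*" by (rule converse_rtrancl_into_rtrancl)
      then show ?thesis using True xW iW sW unfolding reach_in_def by auto
    next
      case False
      then have "x \<in> W'" using xW Wk by auto
      then show ?thesis using rW reach_in_mono[OF sW] by blast
    qed
  qed
  have "directed_sub_block V A X'" unfolding directed_sub_block_def
    using X' iW WX by blast
  then show "has_block_root V A W" unfolding has_block_root_def
    using WX' rW2 X'(5) iW sW by blast
qed


end
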